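(* Let $p\equiv 1\pmod 4$ be a prime dividing $n$, and let $Q_p\subseteq\mathbb{Z}/p\mathbb{Z}$ be the set of nonzero quadratic residues modulo $p$. Let $a,b,c$ be integers coprime to $p$ with $\left(\frac{a}{p}\right)=-\left(\frac{c}{p}\right)$, and put $J_+=\{aq+b \bmod p: q\in Q_p\}$ and $J_-=\{cq-b\bmod p : q\in Q_p\}$ (viewed as subsets of $\{0,\dots,p-1\}$). Let $A$ be a subgroup of $(\mathbb{Z}/n\mathbb{Z})^\times$ which is the disjoint union $$A=\{jn/p+1\bmod n: j\in J_+\}\sqcup\{jn/p-1 \bmod n: j\in J_-\},$$ and let $X=A\cdot 1=A$. Then for $y\in\mathbb{Z}/n\mathbb{Z}$: if $p\mid y$, then $\sigma_X(y)$ lies in the real interval $[1-p,p-1]$; if $p\nmid y$, then $z=\sigma_X(y)$ satisfies $(\operatorname{Re} z)^2+(\operatorname{Im} z)^2/p=1$.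
   Context: Write $e(\theta)=\exp(2\pi i\theta)$. For a subgroup $A$ of $(\mathbb{Z}/n\mathbb{Z})^\times$ and $r\in\mathbb{Z}/n\mathbb{Z}$, let $X=Ar=\{ar:a\in A\}$ and $\sigma_X(y)=\sum_{x\in X}e\left(\frac{xy}{n}\right)$ for $y\in\mathbb{Z}/n\mathbb{Z}$. $\left(\frac{\cdot}{p}\right)$ denotes the Legendre symbol. The condition $p\mid y$ is well defined for $y\in\mathbb{Z}/n\mathbb{Z}$ since $p\mid n$. *)

theory Defs
  imports "HOL-Analysis.Analysis" "HOL-Number_Theory.Number_Theory" "HOL-Algebra.Multiplicative_Group"
begin

definition e_fun :: "real \<Rightarrow> complex" where
  "e_fun \<theta> = exp (2 * of_real pi * \<i> * of_real \<theta>)"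

text \<open>Residues mod n are represented by integers in {0..n-1}; the orbit X = A r.\<close>
definition orbit_set :: "int \<Rightarrow> int set \<Rightarrow> int \<Rightarrow> int set" where
  "orbit_set n A r = (\<lambda>a. (a * r) mod n) ` A"

definition sigma_X :: "int \<Rightarrow> int set \<Rightarrow> int \<Rightarrow> complex" where
  "sigma_X n X y = (\<Sum>x\<in>X. e_fun (real_of_int (x * y) / real_of_int n))"

definition nonzero_QR :: "int \<Rightarrow> int set" where
  "nonzero_QR p = {q. 1 \<le> q \<and> q \<le> p - 1 \<and> QuadRes p q}"

end

theory Submission
  imports Defs
begin


lemma e_add: "e_fun (x + y) = e_fun x * e_fun y"
  unfolding e_fun_def by (simp add: distrib_left exp_add)

lemma e_int: "e_fun (of_int k) = 1"
  unfolding e_fun_def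
  using exp_integer_2pi[of "of_int k"] by (simp add: mult_ac)

lemma e_cnj: "cnj (e_fun x) = e_fun (- x)"
  unfolding e_fun_def by (simp add: exp_cnj)

lemma e_norm: "norm (e_fun x) = 1"
proof -
  have "2 * of_real pi * \<i> * of_real x = \<i> * of_real (2*pi*x)" by simp
  then show ?thesis unfolding e_fun_def by (metis norm_exp_i_times)
qed

lemma e_nat_mult: "e_fun (of_nat v * x) = e_fun x ^ v"
  unfolding e_fun_def using exp_of_nat_mult[of v "2 * of_real pi * \<i> * of_real x"]
  by (simp add: mult_ac)

lemma e_eq_1: "e_fun x = 1 \<Longrightarrow> \<exists>k::int. x = of_int k"
  unfolding e_fun_def exp_eq_1 by auto

definition EE :: "int \<Rightarrow> int \<Rightarrow> complex" where
  "EE p k = e_fun (of_int k / of_int p)"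

lemma EE_add: "EE p (k + l) = EE p k * EE p l"
  unfolding EE_def by (simp add: add_divide_distrib e_add)

lemma EE_cong: assumes "p > 0" "[k = l] (mod p)" shows "EE p k = EE p l"
proof -
  obtain m where m: "k = l + p * m" using assms(2)
    by (metis cong_iff_lin cong_sym)
  have "EE p k = e_fun (of_int l / of_int p + of_int m)"
    unfolding EE_def m using assms(1) by (simp add: field_simps)
  also have "\<dots> = EE p l" unfolding e_add e_int EE_def by simp
  finally show ?thesis .
qed

lemma EE_mod: "p > 0 \<Longrightarrow> EE p (k mod p) = EE p k"
  by (rule EE_cong) (auto simp: cong_def)

lemma EE_dvd: "p > 0 \<Longrightarrow> p dvd k \<Longrightarrow> EE p k = 1"
  using EE_cong[of p k 0] e_int[of 0] by (simp add: EE_def cong_0_iff)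

lemma EE_neg: "cnj (EE p k) = EE p (- k)"
  unfolding EE_def e_cnj by simp

lemma EE_norm: "norm (EE p k) = 1" unfolding EE_def by (rule e_norm)

lemma EE_not1: assumes "p > 0" "\<not> p dvd k" shows "EE p k \<noteq> 1"
proof
  assume "EE p k = 1"
  then obtain j where "of_int k / of_int p = (of_int j :: real)" unfolding EE_def using e_eq_1 by blast
  then have "k = p * j" using assms(1)
    by (metis (no_types, opaque_lifting) divide_eq_eq mult.commute of_int_eq_iff of_int_mult of_int_pos order_less_irrefl)
  then show False using assms by auto
qed

lemma EE_pow: "EE p (k * int v) = EE p k ^ v"
  unfolding EE_def using e_nat_mult[of v "of_int k / of_int p"] by (simp add: mult_ac)

lemma geom_EE: assumes "p > 0"
  shows "(\<Sum>y\<in>{0..<p}. EE p (k * y)) = (if p dvd k then of_int p else 0)"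
proof -
  have "(\<Sum>y\<in>{0..<p}. EE p (k * y)) = (\<Sum>v<nat p. EE p (k * int v))"
  proof (rule sum.reindex_bij_witness[of _ int nat])
  qed (use assms in auto)
  also have "\<dots> = (\<Sum>v<nat p. EE p k ^ v)" by (simp add: EE_pow)
  also have "\<dots> = (if p dvd k then of_int p else 0)"
  proof (cases "p dvd k")
    case True then show ?thesis using EE_dvd[OF assms] assms by simp
  next
    case False
    have "EE p k ^ nat p = EE p (k * p)" using EE_pow[of p k "nat p"] assms by simp
    also have "\<dots> = 1" using EE_dvd assms by simp
    finally show ?thesis using False EE_not1[OF assms False] by (simp add: sum_gp_strict)
  qed
  finally show ?thesis .
qed



lemma endo_inj_onto: "finite A \<Longrightarrow> inj_on g A \<Longrightarrow> g ` A \<subseteq> A \<Longrightarrow> g ` A = A"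
  by (simp add: card_image card_subset_eq)

lemma bij_shift: assumes "(p::int) > 0"
  shows "bij_betw (\<lambda>x. (x + c) mod p) {0..<p} {0..<p}"
proof -
  have inj: "inj_on (\<lambda>x. (x + c) mod p) {0..<p}"
  proof
    fix x y assume "x \<in> {0..<p}" "y \<in> {0..<p}" "(x + c) mod p = (y + c) mod p"
    then have "[x + c = y + c] (mod p)" by (simp add: cong_def)
    then have "[x = y] (mod p)" by (simp add: cong_add_rcancel)
    then show "x = y" using \<open>x \<in> _\<close> \<open>y \<in> _\<close> by (simp add: cong_def)
  qed
  moreover have "(\<lambda>x. (x + c) mod p) ` {0..<p} = {0..<p}"
  proof (rule endo_inj_onto[OF _ inj])
    show "(\<lambda>x. (x + c) mod p) ` {0..<p} \<subseteq> {0..<p}" using assms by (simp add: image_subset_iff)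
  qed simp
  ultimately show ?thesis unfolding bij_betw_def by simp
qed

lemma bij_mult: assumes "prime (p::int)" "coprime s p"
  shows "bij_betw (\<lambda>x. (s * x) mod p) {0..<p} {0..<p}"
proof -
  have p0: "p > 0" using assms prime_gt_0_int by blast
  have inj: "inj_on (\<lambda>x. (s * x) mod p) {0..<p}"
  proof
    fix x y assume xy: "x \<in> {0..<p}" "y \<in> {0..<p}" "(s * x) mod p = (s * y) mod p"
    then have "[s * x = s * y] (mod p)" by (simp add: cong_def)
    then have "[x = y] (mod p)" using cong_mult_lcancel[of s p x y] assms(2) by simp
    then show "x = y" using xy by (simp add: cong_def)
  qed
  moreover have "(\<lambda>x. (s * x) mod p) ` {0..<p} = {0..<p}"
  proof (rule endo_inj_onto[OF _ inj])
    show "(\<lambda>x. (s * x) mod p) ` {0..<p} \<subseteq> {0..<p}" using p0 by (simp add: image_subset_iff)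
  qed simp
  ultimately show ?thesis unfolding bij_betw_def by simp
qed

lemma sum_shift: assumes "(p::int) > 0" "\<And>x. F (x mod p) = F x"
  shows "(\<Sum>x\<in>{0..<p}. F (x + c)) = (\<Sum>x\<in>{0..<p}. F x)"
  using sum.reindex_bij_betw[OF bij_shift[OF assms(1), of c], of F] assms(2)
  by simp

lemma Legendre_mod: "Legendre (x mod p) p = Legendre x p"
  unfolding Legendre_def QuadRes_def cong_def by simp

lemma Legendre_vals: "Legendre x p \<in> {-1, 0, 1}"
  unfolding Legendre_def by auto

lemma Legendre_mult: assumes "prime (p::int)" "p > 2"
  shows "Legendre (x * y) p = Legendre x p * Legendre y p"
proof -
  define P where "P = nat p"
  have pP: "p = int P" using assms P_def by simp
  have P: "prime P" "2 < P" using assms pP by simp_all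
  have "[Legendre (x*y) p = (x*y) ^ ((P - 1) div 2)] (mod p)"
    using euler_criterion[OF P] pP by simp
  moreover have "[Legendre x p * Legendre y p = x ^ ((P - 1) div 2) * y ^ ((P - 1) div 2)] (mod p)"
    using euler_criterion[OF P, of x] euler_criterion[OF P, of y] pP by (simp add: cong_mult)
  ultimately have c: "[Legendre (x*y) p = Legendre x p * Legendre y p] (mod p)"
    unfolding power_mult_distrib using cong_sym cong_trans by metis
  have v: "Legendre (x*y) p \<in> {-1,0,1}" "Legendre x p * Legendre y p \<in> {-1,0,1}"
    using Legendre_vals[of "x*y" p] Legendre_vals[of x p] Legendre_vals[of y p] by auto
  from c have "p dvd (Legendre (x*y) p - Legendre x p * Legendre y p)"
    by (simp add: cong_iff_dvd_diff)
  then obtain k where k: "Legendre (x*y) p - Legendre x p * Legendre y p = p * k" by blast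
  have "k = 0"
  proof (rule ccontr)
    assume "k \<noteq> 0"
    then have "\<bar>p * k\<bar> \<ge> p" using assms by (simp add: abs_mult)
    moreover have "\<bar>Legendre (x*y) p - Legendre x p * Legendre y p\<bar> \<le> 2" using v by auto
    ultimately show False using k assms by auto
  qed
  then show ?thesis using k by simp
qed

lemma Legendre_minus1: assumes "prime (p::int)" "p mod 4 = 1"
  shows "Legendre (-1) p = 1"
proof -
  define P where "P = nat p"
  have p2: "p > 2" using assms prime_gt_1_int[OF assms(1)] by presburger
  have pP: "p = int P" using p2 P_def by simp
  have P: "prime P" "2 < P" using assms pP p2 by simp_all
  have "even ((P - 1) div 2)" using assms(2) pP by presburger
  then have "[Legendre (-1) p = 1] (mod p)"
    using euler_criterion[OF P, of "-1"] pP by simp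
  moreover have "Legendre (-1) p \<in> {-1,0,1}" by (rule Legendre_vals)
  moreover have "\<not> [-1 = 1] (mod p)"
  proof
    assume "[-1 = 1] (mod p)"
    then have "p dvd 2" by (simp add: cong_iff_dvd_diff)
    then show False using p2 zdvd_imp_le by fastforce
  qed
  moreover have "\<not> [0 = 1] (mod p)"
  proof
    assume "[0 = 1] (mod p)"
    then have "p dvd 1" by (simp add: cong_iff_dvd_diff)
    then show False using p2 by simp
  qed
  ultimately show ?thesis by auto
qed

lemma Legendre_coprime: assumes "prime (p::int)" "coprime x p"
  shows "Legendre x p = 1 \<or> Legendre x p = -1"
proof -
  have "\<not> [x = 0] (mod p)"
    using assms by (metis cong_0_iff coprime_absorb_right coprime_commute not_prime_unit)
  then show ?thesis unfolding Legendre_def by auto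
qed

lemma QR_Legendre: assumes "prime (p::int)"
  shows "nonzero_QR p = {q\<in>{1..p-1}. Legendre q p = 1}"
proof -
  have "\<not> [q = 0] (mod p)" if "q \<in> {1..p-1}" for q
  proof
    assume "[q = 0] (mod p)"
    then have "p dvd q" by (simp add: cong_0_iff)
    then show False using that zdvd_imp_le[of p q] by auto
  qed
  then show ?thesis unfolding nonzero_QR_def Legendre_def by auto
qed



lemma prime_not_dvd_small: "prime (p::int) \<Longrightarrow> 0 < x \<Longrightarrow> x < p \<Longrightarrow> \<not> p dvd x"
  by (meson not_le zdvd_imp_le)

lemma sq_bij: assumes pr: "prime (p::int)" and p2: "p > 2"
  shows "bij_betw (\<lambda>x. x^2 mod p) {1..(p-1) div 2} (nonzero_QR p)"
proof -
  define h where "h = (p-1) div 2"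
  have p0: "p > 0" using p2 by simp
  have "odd p" using prime_odd_int[OF pr p2] .
  then obtain k where k: "p = 2*k+1" by (rule oddE)
  have hp: "2*h < p" "2*h+1 = p" unfolding h_def k by simp_all
  have into: "x^2 mod p \<in> nonzero_QR p" if x: "x \<in> {1..h}" for x
  proof -
    have "\<not> p dvd x" using prime_not_dvd_small[OF pr, of x] x hp by auto
    then have "\<not> p dvd x^2" using pr prime_dvd_power_int by blast
    then have "x^2 mod p \<noteq> 0" by (simp add: dvd_eq_mod_eq_0)
    moreover have "0 \<le> x^2 mod p" "x^2 mod p < p" using p0 by simp_all
    moreover have "QuadRes p (x^2 mod p)" unfolding QuadRes_def cong_def by (rule exI[of _ x]) simp
    ultimately show ?thesis unfolding nonzero_QR_def by auto
  qed
  have inj: "inj_on (\<lambda>x. x^2 mod p) {1..h}"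
  proof
    fix x y assume xy: "x \<in> {1..h}" "y \<in> {1..h}" "x^2 mod p = y^2 mod p"
    then have "p dvd (x^2 - y^2)" by (simp add: mod_eq_dvd_iff)
    moreover have "x^2 - y^2 = (x - y) * (x + y)" by (simp add: power2_eq_square algebra_simps)
    ultimately have "p dvd (x - y) \<or> p dvd (x + y)" using pr prime_dvd_mult_iff by metis
    moreover have "\<not> p dvd (x + y)" using prime_not_dvd_small[OF pr, of "x+y"] xy hp by auto
    ultimately have "p dvd (x - y)" by simp
    then obtain k where k: "x - y = p * k" by blast
    have "k = 0"
    proof (rule ccontr)
      assume "k \<noteq> 0"
      then have "\<bar>p*k\<bar> \<ge> p" using p0 by (simp add: abs_mult)
      then show False using k xy hp by auto
    qed
    then show "x = y" using k by simp
  qed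
  have onto: "nonzero_QR p \<subseteq> (\<lambda>x. x^2 mod p) ` {1..h}"
  proof
    fix q assume q: "q \<in> nonzero_QR p"
    then obtain y where y: "[y^2 = q] (mod p)" unfolding nonzero_QR_def QuadRes_def by auto
    define z where "z = y mod p"
    have z: "[z^2 = q] (mod p)" using y unfolding z_def cong_def by (simp add: power_mod)
    have qq: "q mod p = q" using q unfolding nonzero_QR_def by auto
    have "z \<noteq> 0"
    proof
      assume "z = 0"
      then have "q mod p = 0" using z by (simp add: cong_def)
      then show False using qq q unfolding nonzero_QR_def by auto
    qed
    moreover have "0 \<le> z" "z < p" using p0 unfolding z_def by simp_all
    ultimately have z1: "1 \<le> z" "z < p" by simp_all
    show "q \<in> (\<lambda>x. x^2 mod p) ` {1..h}"
    proof (cases "z \<le> h")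
      case True
      then show ?thesis using z z1 qq by (auto simp: cong_def intro!: image_eqI[of _ _ z])
    next
      case False
      define w where "w = p - z"
      have "w^2 = z^2 + p * (p - 2*z)" unfolding w_def by (simp add: power2_eq_square algebra_simps)
      then have "w^2 mod p = z^2 mod p" by simp
      then show ?thesis using z z1 qq False hp unfolding w_def
        by (auto simp: cong_def intro!: image_eqI[of _ _ "p - z"])
    qed
  qed
  show ?thesis unfolding bij_betw_def h_def[symmetric] using inj into onto by auto
qed

lemma card_QR: assumes "prime (p::int)" "p > 2"
  shows "card (nonzero_QR p) = nat ((p-1) div 2)"
  using bij_betw_same_card[OF sq_bij[OF assms]] by simp



definition SS :: "int \<Rightarrow> int \<Rightarrow> complex" where
  "SS p t = (\<Sum>q\<in>nonzero_QR p. EE p (t * q))"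
definition GG :: "int \<Rightarrow> int \<Rightarrow> complex" where
  "GG p t = (\<Sum>x\<in>{0..<p}. EE p (t * x^2))"

lemma GG_SS: assumes pr: "prime (p::int)" and p2: "p > 2"
  shows "GG p t = 1 + 2 * SS p t"
proof -
  define h where "h = (p-1) div 2"
  have p0: "p > 0" using p2 by simp
  have "odd p" using prime_odd_int[OF pr p2] .
  then obtain k where k: "p = 2*k+1" by (rule oddE)
  have hp: "2*h < p" "2*h+1 = p" unfolding h_def k by simp_all
  have h1: "h \<ge> 1" using hp p2 by simp
  have img: "(\<lambda>x. p - x) ` {1..h} = {h+1..p-1}"
  proof
    show "(\<lambda>x. p - x) ` {1..h} \<subseteq> {h+1..p-1}" using hp by auto
    show "{h+1..p-1} \<subseteq> (\<lambda>x. p - x) ` {1..h}"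
    proof
      fix y assume "y \<in> {h+1..p-1}"
      then have "p - y \<in> {1..h}" "y = p - (p - y)" using hp by auto
      then show "y \<in> (\<lambda>x. p - x) ` {1..h}" by blast
    qed
  qed
  have split: "{0..<p} = insert 0 ({1..h} \<union> {h+1..p-1})" using hp p0 by auto
  have "GG p t = EE p 0 + ((\<Sum>x\<in>{1..h}. EE p (t * x^2)) + (\<Sum>x\<in>{h+1..p-1}. EE p (t * x^2)))"
    unfolding GG_def split using h1 by (subst sum.insert) (auto simp: sum.union_disjoint)
  also have "(\<Sum>x\<in>{h+1..p-1}. EE p (t * x^2)) = (\<Sum>x\<in>{1..h}. EE p (t * (p - x)^2))"
    unfolding img[symmetric] by (subst sum.reindex) (auto simp: inj_on_def)
  also have "\<dots> = (\<Sum>x\<in>{1..h}. EE p (t * x^2))"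
  proof (rule sum.cong[OF refl])
    fix x
    have "(p - x)^2 = x^2 + p * (p - 2*x)" by (simp add: power2_eq_square algebra_simps)
    then have "t * (p - x)^2 = t * x^2 + p * (t * (p - 2*x))" by (simp add: power2_eq_square algebra_simps)
    then have "[t * (p - x)^2 = t * x^2] (mod p)" by (simp add: cong_def)
    then show "EE p (t * (p - x)^2) = EE p (t * x^2)" by (rule EE_cong[OF p0])
  qed
  also have "(\<Sum>x\<in>{1..h}. EE p (t * x^2)) = (\<Sum>x\<in>{1..h}. EE p (t * (x^2 mod p)))"
  proof (rule sum.cong[OF refl])
    fix x show "EE p (t * x^2) = EE p (t * (x^2 mod p))"
      by (rule EE_cong[OF p0]) (simp add: cong_def mod_mult_right_eq)
  qed
  also have "\<dots> = SS p t"
    unfolding SS_def using sum.reindex_bij_betw[OF sq_bij[OF pr p2], of "\<lambda>q. EE p (t * q)"]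
    by (simp add: h_def)
  finally show ?thesis using e_int[of 0] unfolding EE_def by simp
qed

lemma EE_zero: "EE p 0 = 1" using e_int[of 0] unfolding EE_def by simp

lemma GG_norm: assumes pr: "prime (p::int)" and p2: "p > 2" and cop: "coprime t p"
  shows "GG p t * cnj (GG p t) = of_int p"
proof -
  have p0: "p > 0" using p2 by simp
  have "GG p t * cnj (GG p t) = (\<Sum>y\<in>{0..<p}. \<Sum>x\<in>{0..<p}. EE p (t * (x^2 - y^2)))"
    unfolding GG_def sum_product cnj_sum EE_neg
    by (subst sum.swap) (simp add: EE_add[symmetric] algebra_simps)
  also have "\<dots> = (\<Sum>y\<in>{0..<p}. \<Sum>x\<in>{0..<p}. EE p (t * ((x + y)^2 - y^2)))"
  proof (rule sum.cong[OF refl])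
    fix y
    show "(\<Sum>x\<in>{0..<p}. EE p (t * (x^2 - y^2))) = (\<Sum>x\<in>{0..<p}. EE p (t * ((x + y)^2 - y^2)))"
    proof (rule sum_shift[OF p0, symmetric])
      fix x
      have "[(x mod p)^2 = x^2] (mod p)" by (rule cong_pow) (simp add: cong_def)
      then have "[t * ((x mod p)^2 - y^2) = t * (x^2 - y^2)] (mod p)"
        by (intro cong_mult cong_diff cong_refl)
      then show "EE p (t * ((x mod p)^2 - y^2)) = EE p (t * (x^2 - y^2))"
        by (rule EE_cong[OF p0])
    qed
  qed
  also have "\<dots> = (\<Sum>y\<in>{0..<p}. \<Sum>x\<in>{0..<p}. EE p (t * x^2) * EE p ((2 * t * x) * y))"
    by (simp add: EE_add[symmetric] power2_eq_square algebra_simps)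
  also have "\<dots> = (\<Sum>x\<in>{0..<p}. EE p (t * x^2) * (\<Sum>y\<in>{0..<p}. EE p ((2 * t * x) * y)))"
    by (subst sum.swap) (simp add: sum_distrib_left)
  also have "\<dots> = (\<Sum>x\<in>{0..<p}. if x = 0 then of_int p else 0)"
  proof (rule sum.cong[OF refl])
    fix x assume x: "x \<in> {0..<p}"
    have "p dvd 2 * t * x \<longleftrightarrow> x = 0"
    proof
      assume d: "p dvd 2 * t * x"
      have "\<not> p dvd 2" using p2 zdvd_imp_le[of p 2] by auto
      moreover have "\<not> p dvd t" using cop pr
        by (metis coprime_absorb_right coprime_commute not_prime_unit)
      ultimately have "p dvd x" using d pr prime_dvd_mult_iff by metis
      then show "x = 0" using x zdvd_imp_le[of p x] by fastforce
    qed simp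
    then show "EE p (t * x^2) * (\<Sum>y\<in>{0..<p}. EE p ((2 * t * x) * y)) = (if x = 0 then of_int p else 0)"
      by (simp add: geom_EE[OF p0] EE_zero)
  qed
  also have "\<dots> = of_int p" using p0 by simp
  finally show ?thesis .
qed

lemma GG_real: assumes pr: "prime (p::int)" and p4: "p mod 4 = 1"
  shows "cnj (GG p t) = GG p t"
proof -
  have p2: "p > 2" using prime_gt_1_int[OF pr] p4 by presburger
  have p0: "p > 0" using p2 by simp
  have "QuadRes p (-1)" using Legendre_minus1[OF pr p4] unfolding Legendre_def by (auto split: if_splits)
  then obtain s where s: "[s^2 = -1] (mod p)" unfolding QuadRes_def by auto
  have "coprime s p"
  proof (rule ccontr)
    assume "\<not> coprime s p"
    then have "p dvd s" using pr prime_imp_coprime coprime_commute by blast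
    then have "[s^2 = 0] (mod p)" by (simp add: cong_0_iff power2_eq_square)
    then have "[-1 = 0] (mod p)" using s cong_sym cong_trans by metis
    then have "p dvd 1" by (simp add: cong_0_iff)
    then show False using p2 by simp
  qed
  have "GG p t = (\<Sum>x\<in>{0..<p}. EE p (t * ((s * x) mod p)^2))"
    unfolding GG_def using sum.reindex_bij_betw[OF bij_mult[OF pr \<open>coprime s p\<close>], of "\<lambda>x. EE p (t * x^2)"]
    by simp
  also have "\<dots> = (\<Sum>x\<in>{0..<p}. EE p (- (t * x^2)))"
  proof (rule sum.cong[OF refl])
    fix x
    have "[((s * x) mod p)^2 = (s*x)^2] (mod p)" by (rule cong_pow) (simp add: cong_def)
    moreover have "(s*x)^2 = s^2 * x^2" by (simp add: power_mult_distrib)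
    moreover have "[s^2 * x^2 = -1 * x^2] (mod p)" using s by (intro cong_mult cong_refl)
    ultimately have "[((s * x) mod p)^2 = - (x^2)] (mod p)" using cong_trans by fastforce
    then have "[t * ((s * x) mod p)^2 = t * (- (x^2))] (mod p)" by (intro cong_mult cong_refl)
    then show "EE p (t * ((s * x) mod p)^2) = EE p (- (t * x^2))" by (simp add: EE_cong[OF p0])
  qed
  also have "\<dots> = cnj (GG p t)" unfolding GG_def cnj_sum EE_neg by simp
  finally show ?thesis by simp
qed



lemma SS_T: assumes pr: "prime (p::int)" and p2: "p > 2" and cop: "coprime t p"
  shows "SS p t = (\<Sum>r\<in>{r\<in>{1..p-1}. Legendre r p = Legendre t p}. EE p r)"
proof -
  define T where "T = {r\<in>{1..p-1}. Legendre r p = Legendre t p}"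
  define h where "h = (p-1) div 2"
  have p0: "p > 0" using p2 by simp
  have "odd p" using prime_odd_int[OF pr p2] .
  then obtain k where k: "p = 2*k+1" by (rule oddE)
  have hp: "2*h+1 = p" unfolding h_def k by simp_all
  have QR: "nonzero_QR p = {q\<in>{1..p-1}. Legendre q p = 1}" by (rule QR_Legendre[OF pr])
  have cQR: "card (nonzero_QR p) = nat h" using card_QR[OF pr p2] h_def by simp
  have ntp: "\<not> p dvd t" using cop pr
    by (metis coprime_absorb_right coprime_commute not_prime_unit)
  have Lt: "Legendre t p = 1 \<or> Legendre t p = -1" by (rule Legendre_coprime[OF pr cop])
  have Lall: "Legendre r p = 1 \<or> Legendre r p = -1" if "r \<in> {1..p-1}" for r
  proof (rule Legendre_coprime[OF pr])
    have "\<not> p dvd r" using that prime_not_dvd_small[OF pr, of r] by auto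
    then show "coprime r p" using pr prime_imp_coprime coprime_commute by blast
  qed
  have cT: "card T = nat h"
  proof (cases "Legendre t p = 1")
    case True
    then show ?thesis using cQR QR unfolding T_def by simp
  next
    case False
    then have Lt': "Legendre t p = -1" using Lt by simp
    have "T = {1..p-1} - nonzero_QR p" unfolding T_def QR using Lt' Lall by (auto; metis)
    moreover have "nonzero_QR p \<subseteq> {1..p-1}" unfolding QR by auto
    ultimately have "card T = card {1..p-1} - card (nonzero_QR p)"
      by (simp add: card_Diff_subset finite_subset)
    then show ?thesis using cQR hp by simp
  qed
  define \<mu> where "\<mu> q = (t * q) mod p" for q
  have inj: "inj_on \<mu> (nonzero_QR p)"
  proof
    fix x y assume xy: "x \<in> nonzero_QR p" "y \<in> nonzero_QR p" "\<mu> x = \<mu> y"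
    then have "[t * x = t * y] (mod p)" unfolding \<mu>_def by (simp add: cong_def)
    then have "[x = y] (mod p)" using cong_mult_lcancel[of t p x y] cop by simp
    then show "x = y" using xy unfolding nonzero_QR_def by (simp add: cong_def)
  qed
  have into: "\<mu> ` nonzero_QR p \<subseteq> T"
  proof
    fix r assume "r \<in> \<mu> ` nonzero_QR p"
    then obtain q where q: "q \<in> nonzero_QR p" "r = (t * q) mod p" unfolding \<mu>_def by auto
    have Lq: "Legendre q p = 1" using q QR by auto
    have "\<not> p dvd q" using q prime_not_dvd_small[OF pr, of q] unfolding nonzero_QR_def by auto
    then have "\<not> p dvd t * q" using ntp pr prime_dvd_mult_iff by metis
    then have "r \<noteq> 0" using q by (simp add: dvd_eq_mod_eq_0)
    moreover have "0 \<le> r" "r < p" using q p0 by simp_all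
    moreover have "Legendre r p = Legendre t p"
      using q Lq Legendre_mod[of "t*q" p] Legendre_mult[OF pr p2, of t q] by simp
    ultimately show "r \<in> T" unfolding T_def by auto
  qed
  have eq: "\<mu> ` nonzero_QR p = T"
  proof (rule card_subset_eq)
    show "finite T" unfolding T_def by (rule finite_subset[of _ "{1..p-1}"]) auto
    show "card (\<mu> ` nonzero_QR p) = card T" using card_image[OF inj] cQR cT by simp
  qed (rule into)
  have "SS p t = (\<Sum>q\<in>nonzero_QR p. EE p (\<mu> q))"
    unfolding SS_def \<mu>_def by (simp add: EE_mod[OF p0])
  also have "\<dots> = (\<Sum>r\<in>T. EE p r)" using sum.reindex[OF inj, of "EE p"] eq by simp
  finally show ?thesis unfolding T_def .
qed

lemma SS_pair: assumes pr: "prime (p::int)" and p2: "p > 2" and c1: "coprime t1 p" and c2: "coprime t2 p"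
  and L: "Legendre t1 p = - Legendre t2 p"
  shows "SS p t1 + SS p t2 = -1"
proof -
  have p0: "p > 0" using p2 by simp
  define T1 where "T1 = {r\<in>{1..p-1}. Legendre r p = Legendre t1 p}"
  define T2 where "T2 = {r\<in>{1..p-1}. Legendre r p = Legendre t2 p}"
  have Lt: "Legendre t2 p = 1 \<or> Legendre t2 p = -1" by (rule Legendre_coprime[OF pr c2])
  have Lall: "Legendre r p = 1 \<or> Legendre r p = -1" if "r \<in> {1..p-1}" for r
  proof (rule Legendre_coprime[OF pr])
    have "\<not> p dvd r" using that prime_not_dvd_small[OF pr, of r] by auto
    then show "coprime r p" using pr prime_imp_coprime coprime_commute by blast
  qed
  have un: "T1 \<union> T2 = {1..p-1}" unfolding T1_def T2_def using L Lt Lall by (auto; metis)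
  have dis: "T1 \<inter> T2 = {}" unfolding T1_def T2_def using L Lt by auto
  have "SS p t1 + SS p t2 = (\<Sum>r\<in>T1. EE p r) + (\<Sum>r\<in>T2. EE p r)"
    using SS_T[OF pr p2 c1] SS_T[OF pr p2 c2] unfolding T1_def T2_def by simp
  also have "\<dots> = (\<Sum>r\<in>{1..p-1}. EE p r)"
  proof -
    have "finite T1" "finite T2" using un finite_subset[of _ "{1..p-1}"] by blast+
    then show ?thesis using sum.union_disjoint[of T1 T2 "EE p"] un dis by simp
  qed
  also have "\<dots> = (\<Sum>r\<in>{0..<p}. EE p (1 * r)) - EE p 0"
  proof -
    have "{0..<p} = insert 0 {1..p-1}" using p0 by auto
    then show ?thesis by simp
  qed
  also have "\<dots> = -1" using geom_EE[OF p0, of 1] p2 EE_zero by simp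
  finally show ?thesis .
qed



lemma e_EE: "e_fun (of_int k / of_int n) = EE n k" unfolding EE_def by simp

lemma cnj_decomp:
  fixes z g s1 s2 :: complex and p :: real
  assumes g: "Im g = 0" "(Re g)^2 = p" and s1: "s1 = (g - 1) / 2" and s2: "s2 = (- g - 1)/2"
    and z: "norm z = 1" and p: "p > 0"
  shows "(Re (z * s1 + cnj z * s2))^2 + (Im (z * s1 + cnj z * s2))^2 / p = 1"
proof -
  obtain zx zy where zz: "z = Complex zx zy" by (cases z)
  obtain r where gg: "g = Complex r 0" using g(1) by (cases g) auto
  have r: "r^2 = p" using g gg by simp
  have n1: "zx^2 + zy^2 = 1" using z zz by (simp add: cmod_def)
  have h: "Re (z * s1 + cnj z * s2) = - zx" "Im (z * s1 + cnj z * s2) = r * zy"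
    unfolding s1 s2 zz gg by (simp_all add: field_simps)
  have "zx^2 + (r*zy)^2/p = 1" using n1 r p by (simp add: power_mult_distrib field_simps)
  then show ?thesis unfolding h by simp
qed

lemma sum_part:
  assumes n0: "n > 0" and pr: "prime (p::int)" and pn: "p dvd n" and cop: "coprime a p"
  shows "(\<Sum>x\<in>(\<lambda>j. (j * (n div p) + s) mod n) ` ((\<lambda>q. (a * q + bb) mod p) ` nonzero_QR p).
            e_fun (of_int (x * y) / of_int n))
         = e_fun (of_int (s * y) / of_int n) * EE p (bb * y) * SS p (a * y)"
proof -
  define m where "m = n div p"
  have p0: "p > 0" using pr prime_gt_0_int by blast
  have nm: "n = p * m" using pn unfolding m_def by simp
  have m0: "m > 0" using n0 p0 nm zero_less_mult_pos by blast
  define h where "h q = ((a * q + bb) mod p * m + s) mod n" for q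
  have img: "(\<lambda>j. (j * (n div p) + s) mod n) ` ((\<lambda>q. (a * q + bb) mod p) ` nonzero_QR p) = h ` nonzero_QR p"
    unfolding h_def m_def image_image by simp
  have inj: "inj_on h (nonzero_QR p)"
  proof
    fix q1 q2 assume q: "q1 \<in> nonzero_QR p" "q2 \<in> nonzero_QR p" "h q1 = h q2"
    define d where "d = (a * q1 + bb) mod p - (a * q2 + bb) mod p"
    have "[(a * q1 + bb) mod p * m + s = (a * q2 + bb) mod p * m + s] (mod n)"
      using q(3) unfolding h_def by (simp add: cong_def)
    then have "n dvd d * m" unfolding d_def by (simp add: cong_iff_dvd_diff algebra_simps)
    then have "p dvd d" using m0 unfolding nm by simp
    then have "[(a * q1 + bb) mod p = (a * q2 + bb) mod p] (mod p)"
      unfolding d_def by (simp add: cong_iff_dvd_diff)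
    then have "[a * q1 + bb = a * q2 + bb] (mod p)" by (simp add: cong_def)
    then have "[a * q1 = a * q2] (mod p)" by (simp add: cong_add_rcancel)
    then have "[q1 = q2] (mod p)" using cong_mult_lcancel[of a p q1 q2] cop by simp
    then show "q1 = q2" using q unfolding nonzero_QR_def by (simp add: cong_def)
  qed
  have trm: "e_fun (of_int (h q * y) / of_int n)
      = e_fun (of_int (s * y) / of_int n) * EE p (bb * y) * EE p ((a * y) * q)" for q
  proof -
    define g where "g = (a * q + bb) mod p"
    have "e_fun (of_int (h q * y) / of_int n) = EE n ((g * m + s) * y)"
      unfolding e_EE h_def g_def by (rule EE_cong[OF n0]) (simp add: cong_def mod_mult_left_eq)
    also have "\<dots> = e_fun (of_int (g * y) / of_int p + of_int (s * y) / of_int n)"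
      unfolding EE_def using p0 m0 nm by (simp add: field_simps)
    also have "\<dots> = EE p (g * y) * e_fun (of_int (s * y) / of_int n)"
      unfolding e_add EE_def ..
    also have "EE p (g * y) = EE p ((a * q + bb) * y)"
      unfolding g_def by (rule EE_cong[OF p0]) (simp add: cong_def mod_mult_left_eq)
    also have "\<dots> = EE p (bb * y) * EE p ((a * y) * q)"
      by (simp add: EE_add[symmetric] algebra_simps)
    finally show ?thesis by simp
  qed
  show ?thesis unfolding img sum.reindex[OF inj] o_def trm SS_def
    by (simp add: sum_distrib_left)
qed

theorem proposition5p1:
  fixes n p a b c :: int and A :: "int set"
  assumes n_pos: "n > 0"
    and p_prime: "prime p" and p_mod4: "p mod 4 = 1" and p_dvd: "p dvd n"
    and a_cop: "coprime a p" and b_cop: "coprime b p" and c_cop: "coprime c p"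
    and leg: "Legendre a p = - Legendre c p"
    and A_sub: "subgroup A (units_of (residue_ring n))"
    and A_eq: "A = (\<lambda>j. (j * (n div p) + 1) mod n) ` ((\<lambda>q. (a * q + b) mod p) ` nonzero_QR p)
               \<union> (\<lambda>j. (j * (n div p) - 1) mod n) ` ((\<lambda>q. (c * q - b) mod p) ` nonzero_QR p)"
    and A_disj: "(\<lambda>j. (j * (n div p) + 1) mod n) ` ((\<lambda>q. (a * q + b) mod p) ` nonzero_QR p)
               \<inter> (\<lambda>j. (j * (n div p) - 1) mod n) ` ((\<lambda>q. (c * q - b) mod p) ` nonzero_QR p) = {}"
  shows "\<forall>y\<in>{0..<n}.
           (p dvd y \<longrightarrow> sigma_X n (orbit_set n A 1) y \<in> \<real> \<and>
              real_of_int (1 - p) \<le> Re (sigma_X n (orbit_set n A 1) y) \<and>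
              Re (sigma_X n (orbit_set n A 1) y) \<le> real_of_int (p - 1))
         \<and> (\<not> p dvd y \<longrightarrow>
              (Re (sigma_X n (orbit_set n A 1) y))\<^sup>2 + (Im (sigma_X n (orbit_set n A 1) y))\<^sup>2 / real_of_int p = 1)"
proof (intro ballI conjI impI)
  fix y assume y: "y \<in> {0..<n}"
  define QR where "QR = nonzero_QR p"
  define P where "P = (\<lambda>j. (j * (n div p) + 1) mod n) ` ((\<lambda>q. (a * q + b) mod p) ` QR)"
  define M where "M = (\<lambda>j. (j * (n div p) + (-1)) mod n) ` ((\<lambda>q. (c * q + (-b)) mod p) ` QR)"
  have AA: "A = P \<union> M" and dis: "P \<inter> M = {}"
    using A_eq A_disj unfolding P_def M_def QR_def by simp_all
  have p0: "p > 0" using p_prime prime_gt_0_int by blast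
  have p2: "p > 2" using prime_gt_1_int[OF p_prime] p_mod4 by presburger
  have orb: "orbit_set n A 1 = A"
  proof -
    have "x mod n = x" if "x \<in> A" for x using that unfolding AA P_def M_def by auto
    then show ?thesis unfolding orbit_set_def by simp
  qed
  have finQR: "finite QR" unfolding QR_def nonzero_QR_def by (rule finite_subset[of _ "{1..p-1}"]) auto
  have fin: "finite P" "finite M" unfolding P_def M_def using finQR by simp_all
  define w where "w = e_fun (of_int y / of_int n)"
  have cw: "cnj w = e_fun (of_int (- 1 * y) / of_int n)" unfolding w_def e_cnj by simp
  have sig: "sigma_X n (orbit_set n A 1) y
     = w * EE p (b * y) * SS p (a * y) + cnj w * EE p (- b * y) * SS p (c * y)"
    unfolding orb unfolding sigma_X_def AA sum.union_disjoint[OF fin dis]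
    unfolding P_def M_def QR_def sum_part[OF n_pos p_prime p_dvd a_cop] sum_part[OF n_pos p_prime p_dvd c_cop]
    unfolding cw w_def by (simp add: e_cnj)
  {
    assume py: "p dvd y"
    have "EE p (b * y) = 1" "EE p (- b * y) = 1" using py EE_dvd[OF p0] by simp_all
    moreover have "SS p (t * y) = of_nat (card QR)" for t
      unfolding SS_def QR_def using py EE_dvd[OF p0] by simp
    ultimately have "sigma_X n (orbit_set n A 1) y = of_nat (card QR) * (w + cnj w)"
      unfolding sig by (simp add: algebra_simps)
    also have "\<dots> = of_real (real (card QR) * (2 * Re w))" by (simp add: complex_add_cnj)
    finally have sg: "sigma_X n (orbit_set n A 1) y = of_real (real (card QR) * (2 * Re w))" .
    have cq: "2 * real (card QR) = real_of_int (p - 1)"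
    proof -
      have "odd p" using prime_odd_int[OF p_prime p2] .
      then obtain k where k: "p = 2*k+1" by (rule oddE)
      show ?thesis using card_QR[OF p_prime p2] k p0 unfolding QR_def by simp
    qed
    have "\<bar>Re w\<bar> \<le> 1" using abs_Re_le_cmod[of w] e_norm unfolding w_def by simp
    then have "\<bar>real (card QR) * (2 * Re w)\<bar> \<le> real_of_int (p - 1)"
    proof -
      have "\<bar>2 * Re w\<bar> \<le> 2" using \<open>\<bar>Re w\<bar> \<le> 1\<close> by simp
      then have "real (card QR) * \<bar>2 * Re w\<bar> \<le> real (card QR) * 2"
        by (rule mult_left_mono) simp
      then show ?thesis using cq by (simp only: abs_mult abs_of_nat)
    qed
    then show "sigma_X n (orbit_set n A 1) y \<in> \<real>"
      "real_of_int (1 - p) \<le> Re (sigma_X n (orbit_set n A 1) y)"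
      "Re (sigma_X n (orbit_set n A 1) y) \<le> real_of_int (p - 1)"
      unfolding sg by auto
  }
  {
    assume py: "\<not> p dvd y"
    have cy: "coprime y p" using py p_prime prime_imp_coprime coprime_commute by blast
    have cay: "coprime (a * y) p" "coprime (c * y) p" using cy a_cop c_cop by simp_all
    have L: "Legendre (a * y) p = - Legendre (c * y) p"
      using leg Legendre_mult[OF p_prime p2] by simp
    have sum1: "SS p (a * y) + SS p (c * y) = -1" by (rule SS_pair[OF p_prime p2 cay L])
    define g where "g = GG p (a * y)"
    have gr: "cnj g = g" unfolding g_def by (rule GG_real[OF p_prime p_mod4])
    have gn: "g * cnj g = of_int p" unfolding g_def by (rule GG_norm[OF p_prime p2 cay(1)])
    have "Im (cnj g) = Im g" using gr by simp
    then have img: "Im g = 0" by simp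
    have rg: "(Re g)^2 = real_of_int p"
    proof -
      have "Re (g * cnj g) = (Re g)^2 + (Im g)^2" by (simp add: power2_eq_square)
      then show ?thesis using gn img by simp
    qed
    have s1: "SS p (a * y) = (g - 1) / 2" unfolding g_def GG_SS[OF p_prime p2] by simp
    have "SS p (c * y) = -1 - SS p (a * y)" using sum1 by (simp add: eq_diff_eq add.commute)
    then have "SS p (c * y) = -1 - (g - 1) / 2" by (simp only: s1)
    also have "-1 - (g - 1) / 2 = (- g - 1) / (2::complex)" by (simp add: field_simps)
    finally have s2: "SS p (c * y) = (- g - 1) / 2" .
    define z where "z = w * EE p (b * y)"
    have cz: "cnj z = cnj w * EE p (- b * y)" unfolding z_def by (simp add: EE_neg)
    have nz: "norm z = 1" unfolding z_def norm_mult EE_norm w_def e_norm by simp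
    have "sigma_X n (orbit_set n A 1) y = z * SS p (a * y) + cnj z * SS p (c * y)"
      unfolding sig cz unfolding z_def by simp
    then show "(Re (sigma_X n (orbit_set n A 1) y))\<^sup>2 + (Im (sigma_X n (orbit_set n A 1) y))\<^sup>2 / real_of_int p = 1"
      using cnj_decomp[OF img rg s1 s2 nz] p0 by simp
  }
qed

end
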